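(* Let $n\geq1$, $d\geq2$. For $y,v,w,z\in\mathbb Z_{\geq0}^n$ with entries of each summing to $d-1$ and $y+v=z+w$, the polynomial $$\sum_{s=1}^n\left(u_{y+e_s}u_{v+e_s}-u_{w+e_s}u_{z+e_s}\right)$$ vanishes on the odeco variety in $S^d(\mathbb C^n)$.
   Context: For $T\in S^d(\mathbb C^n)$ and $a=(a_1,\dots,a_n)\in\mathbb Z_{\geq0}^n$ with $a_1+\dots+a_n=d$, the coordinate $u_a$ is $u_a=d!\,T_{1\dots1\,2\dots2\,\dots\,n\dots n}$ where index $j$ is repeated $a_j$ times; $e_s$ is the $s$-th standard basis vector. A real tensor $T\in S^d(\mathbb R^n)$ is odeco if $T=\sum_{i=1}^n\lambda_iv_i^{\otimes d}$ with $v_1,\dots,v_n$ an orthonormal basis of $\mathbb R^n$ and $\lambda_i\in\mathbb R$; the odeco variety is the Zariski closure in $S^d(\mathbb C^n)$ of the set of odeco tensors. *)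

theory Defs
  imports Complex_Main "HOL-Library.Multiset"
begin

text \<open>Symmetric tensors in S^d(C^n): functions on index lists (indices 0..n-1,
  length d), invariant under permuting the index list, and zero off the index domain.\<close>

definition valid_index :: "nat \<Rightarrow> nat \<Rightarrow> nat list \<Rightarrow> bool" where
  "valid_index n d xs \<longleftrightarrow> length xs = d \<and> (\<forall>i\<in>set xs. i < n)"

definition sym_tensors :: "nat \<Rightarrow> nat \<Rightarrow> (nat list \<Rightarrow> complex) set" where
  "sym_tensors n d = {T. (\<forall>xs. \<not> valid_index n d xs \<longrightarrow> T xs = 0) \<and>
      (\<forall>xs ys. mset xs = mset ys \<longrightarrow> T xs = T ys)}"

inductive_set poly_fun :: "((nat list \<Rightarrow> complex) \<Rightarrow> complex) set" where
  pf_const: "(\<lambda>T. c) \<in> poly_fun"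
| pf_coord: "(\<lambda>T. T xs) \<in> poly_fun"
| pf_add: "p \<in> poly_fun \<Longrightarrow> q \<in> poly_fun \<Longrightarrow> (\<lambda>T. p T + q T) \<in> poly_fun"
| pf_mult: "p \<in> poly_fun \<Longrightarrow> q \<in> poly_fun \<Longrightarrow> (\<lambda>T. p T * q T) \<in> poly_fun"

definition zariski_closure ::
  "(nat list \<Rightarrow> complex) set \<Rightarrow> (nat list \<Rightarrow> complex) set \<Rightarrow> (nat list \<Rightarrow> complex) set" where
  "zariski_closure A S = {T \<in> A. \<forall>p \<in> poly_fun. (\<forall>X \<in> S. p X = 0) \<longrightarrow> p T = 0}"

text \<open>Odeco tensors: sum_i lambda_i v_i^{\<otimes>d} for an orthonormal basis v_0..v_{n-1} of R^n,
  viewed as complex tensors.\<close>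

definition orthonormal_basis :: "nat \<Rightarrow> (nat \<Rightarrow> nat \<Rightarrow> real) \<Rightarrow> bool" where
  "orthonormal_basis n v \<longleftrightarrow>
     (\<forall>i<n. \<forall>j<n. (\<Sum>k<n. v i k * v j k) = (if i = j then 1 else 0))"

definition odeco_tensor :: "nat \<Rightarrow> nat \<Rightarrow> (nat \<Rightarrow> real) \<Rightarrow> (nat \<Rightarrow> nat \<Rightarrow> real) \<Rightarrow> (nat list \<Rightarrow> complex)" where
  "odeco_tensor n d lam v = (\<lambda>xs. if valid_index n d xs then
       complex_of_real (\<Sum>i<n. lam i * (\<Prod>k<d. v i (xs ! k))) else 0)"

definition odeco_tensors :: "nat \<Rightarrow> nat \<Rightarrow> (nat list \<Rightarrow> complex) set" where
  "odeco_tensors n d = {odeco_tensor n d lam v | lam v. orthonormal_basis n v}"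

definition odeco_variety :: "nat \<Rightarrow> nat \<Rightarrow> (nat list \<Rightarrow> complex) set" where
  "odeco_variety n d = zariski_closure (sym_tensors n d) (odeco_tensors n d)"

text \<open>Coordinate u_a = d! T_{1..1 2..2 ... n..n} (0-based indices here).\<close>

definition index_list :: "nat \<Rightarrow> (nat \<Rightarrow> nat) \<Rightarrow> nat list" where
  "index_list n a = concat (map (\<lambda>j. replicate (a j) j) [0..<n])"

definition ucoord :: "nat \<Rightarrow> nat \<Rightarrow> (nat \<Rightarrow> nat) \<Rightarrow> (nat list \<Rightarrow> complex) \<Rightarrow> complex" where
  "ucoord n d a T = of_nat (fact d) * T (index_list n a)"

definition unit_add :: "(nat \<Rightarrow> nat) \<Rightarrow> nat \<Rightarrow> (nat \<Rightarrow> nat)" where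
  "unit_add a s = a(s := a s + 1)"

end

theory Submission imports Defs begin

lemma prod_nth_list: "(\<Prod>k<length xs. (f::_\<Rightarrow>'a::comm_monoid_mult) (xs!k)) = prod_list (map f xs)"
  by (induct xs rule: rev_induct) (auto simp: nth_append lessThan_Suc mult.commute)

lemma prod_list_upt': "prod_list (map (g::_\<Rightarrow>'a::comm_monoid_mult) [0..<n]) = (\<Prod>j<n. g j)"
  by (induct n) (auto simp: lessThan_Suc mult.commute)

lemma sum_list_upt': "sum_list (map (g::_\<Rightarrow>'a::comm_monoid_add) [0..<n]) = (\<Sum>j<n. g j)"
  by (induct n) (auto simp: lessThan_Suc add.commute)

lemma index_list_length: "length (index_list n a) = (\<Sum>j<n. a j)"
  unfolding index_list_def by (simp add: length_concat o_def sum_list_upt')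

lemma index_list_set: "set (index_list n a) \<subseteq> {..<n}"
  unfolding index_list_def by auto

lemma index_list_prod: "prod_list (map (f::_\<Rightarrow>'a::comm_monoid_mult) (index_list n a)) = (\<Prod>j<n. f j ^ a j)"
proof -
  have g: "prod_list (map f (concat xss)) = prod_list (map (\<lambda>xs. prod_list (map f xs)) xss)" for xss
    by (induct xss) auto
  show ?thesis unfolding index_list_def g by (simp add: o_def prod_list_upt')
qed

lemma prod_unit_add:
  fixes f :: "nat \<Rightarrow> 'a::comm_monoid_mult"
  assumes "s < n"
  shows "(\<Prod>j<n. f j ^ unit_add a s j) = (\<Prod>j<n. f j ^ a j) * f s"
proof -
  have "(\<Prod>j<n. f j ^ unit_add a s j) = (\<Prod>j<n. f j ^ a j * (if j = s then f j else 1))"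
    by (rule prod.cong) (auto simp: unit_add_def mult.commute)
  also have "\<dots> = (\<Prod>j<n. f j ^ a j) * f s"
    using assms by (simp add: prod.distrib prod.delta; metis mult.commute)
  finally show ?thesis .
qed

lemma poly_sum:
  fixes f :: "nat \<Rightarrow> (nat list \<Rightarrow> complex) \<Rightarrow> complex"
  assumes "\<And>s. s < n \<Longrightarrow> f s \<in> poly_fun" shows "(\<lambda>T. \<Sum>s<n. f s T) \<in> poly_fun"
  using assms
proof (induct n)
  case 0 then show ?case using pf_const[of 0] by simp
next
  case (Suc n)
  have "(\<lambda>T. (\<Sum>s<n. f s T) + f n T) \<in> poly_fun"
    using Suc by (intro pf_add) auto
  then show ?case by (simp add: lessThan_Suc add.commute)
qed

lemma poly_diff: "p \<in> poly_fun \<Longrightarrow> q \<in> poly_fun \<Longrightarrow> (\<lambda>T. p T - q T) \<in> poly_fun"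
proof -
  assume "p \<in> poly_fun" "q \<in> poly_fun"
  then have "(\<lambda>T. p T + (\<lambda>T. -1) T * q T) \<in> poly_fun"
    by (intro pf_add pf_mult pf_const)
  then show ?thesis by simp
qed

lemma poly_ucoord: "ucoord n d a \<in> poly_fun"
proof -
  have "(\<lambda>T. (\<lambda>T. of_nat (fact d)) T * (\<lambda>T. T (index_list n a)) T) \<in> poly_fun"
    by (intro pf_mult pf_const pf_coord)
  then show ?thesis unfolding ucoord_def by simp
qed


lemma ortho_sum:
  fixes A B :: "nat \<Rightarrow> real"
  assumes "orthonormal_basis n vv"
  shows "(\<Sum>s<n. (\<Sum>i<n. A i * vv i s) * (\<Sum>k<n. B k * vv k s)) = (\<Sum>i<n. A i * B i)"
proof -
  have 1: "(\<Sum>i<n. A i * vv i s) * (\<Sum>k<n. B k * vv k s)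
      = (\<Sum>i<n. \<Sum>k<n. A i * B k * (vv i s * vv k s))" for s
    unfolding sum_product by (intro sum.cong refl) (simp only: mult_ac)
  have 2: "(\<Sum>s<n. \<Sum>i<n. \<Sum>k<n. A i * B k * (vv i s * vv k s))
      = (\<Sum>i<n. \<Sum>k<n. \<Sum>s<n. A i * B k * (vv i s * vv k s))"
  proof -
    have sw: "\<And>G :: nat \<Rightarrow> nat \<Rightarrow> real. (\<Sum>s<n. \<Sum>i<n. G s i) = (\<Sum>i<n. \<Sum>s<n. G s i)"
      by (rule sum.swap)
    have "(\<Sum>s<n. \<Sum>i<n. \<Sum>k<n. A i * B k * (vv i s * vv k s))
        = (\<Sum>i<n. \<Sum>s<n. \<Sum>k<n. A i * B k * (vv i s * vv k s))" by (rule sw)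
    also have "\<dots> = (\<Sum>i<n. \<Sum>k<n. \<Sum>s<n. A i * B k * (vv i s * vv k s))"
      by (rule sum.cong[OF refl]) (rule sw)
    finally show ?thesis .
  qed
  have 3: "(\<Sum>s<n. A i * B k * (vv i s * vv k s)) = A i * B k * (if i = k then 1 else 0)"
    if "i < n" "k < n" for i k
  proof -
    have "(\<Sum>s<n. A i * B k * (vv i s * vv k s)) = A i * B k * (\<Sum>s<n. vv i s * vv k s)"
      by (simp only: sum_distrib_left)
    also have "(\<Sum>s<n. vv i s * vv k s) = (if i = k then 1 else 0)"
      using assms that unfolding orthonormal_basis_def by blast
    finally show ?thesis .
  qed
  have 4: "(\<Sum>k<n. A i * B k * (if i = k then 1 else 0)) = A i * B i" if "i < n" for i
  proof -
    have "(\<Sum>k<n. A i * B k * (if i = k then 1 else 0)) = (\<Sum>k<n. if i = k then A i * B k else 0)"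
      by (intro sum.cong refl) simp
    also have "\<dots> = A i * B i" using that by simp
    finally show ?thesis .
  qed
  have "(\<Sum>s<n. (\<Sum>i<n. A i * vv i s) * (\<Sum>k<n. B k * vv k s))
      = (\<Sum>i<n. \<Sum>k<n. \<Sum>s<n. A i * B k * (vv i s * vv k s))"
    unfolding 1 2 ..
  also have "\<dots> = (\<Sum>i<n. \<Sum>k<n. A i * B k * (if i = k then 1 else 0))"
    using 3 by (intro sum.cong refl) auto
  also have "\<dots> = (\<Sum>i<n. A i * B i)"
    using 4 by (intro sum.cong refl) auto
  finally show ?thesis .
qed

lemma odeco_eval:
  assumes "(\<Sum>j<n. a j) = d"
  shows "odeco_tensor n d lam vv (index_list n a) =
     complex_of_real (\<Sum>i<n. lam i * (\<Prod>j<n. vv i j ^ a j))"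
proof -
  have v: "valid_index n d (index_list n a)"
    using index_list_set[of n a] index_list_length[of n a] assms
    unfolding valid_index_def by auto
  have "\<And>i. (\<Prod>k<d. vv i (index_list n a ! k)) = (\<Prod>j<n. vv i j ^ a j)"
    using prod_nth_list[of "vv _" "index_list n a"] index_list_prod[of "vv _" n a]
      index_list_length[of n a] assms by simp
  then show ?thesis using v unfolding odeco_tensor_def by simp
qed

lemma sum_unit_add: "s < n \<Longrightarrow> (\<Sum>j<n. unit_add a s j) = (\<Sum>j<n. a j) + 1"
proof -
  assume s: "s < n"
  have "(\<Sum>j<n. unit_add a s j) = (\<Sum>j<n. a j + (if j = s then 1 else 0))"
    by (rule sum.cong) (auto simp: unit_add_def)
  then show ?thesis using s by (simp add: sum.distrib)
qed

lemma ucoord_odeco: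
  assumes "(\<Sum>j<n. a j) = d - 1" "d \<ge> 1" "s < n"
  shows "ucoord n d (unit_add a s) (odeco_tensor n d lam vv) =
     of_nat (fact d) * complex_of_real (\<Sum>i<n. (lam i * (\<Prod>j<n. vv i j ^ a j)) * vv i s)"
proof -
  have "(\<Sum>j<n. unit_add a s j) = d" using sum_unit_add[OF assms(3), of a] assms by simp
  then show ?thesis unfolding ucoord_def
    by (simp add: odeco_eval prod_unit_add[OF assms(3)] mult.assoc)
qed

theorem lemma3p5:
  fixes n d :: nat and y v w z :: "nat \<Rightarrow> nat"
  assumes "n \<ge> 1" and "d \<ge> 2"
    and "(\<Sum>i<n. y i) = d - 1" and "(\<Sum>i<n. v i) = d - 1"
    and "(\<Sum>i<n. w i) = d - 1" and "(\<Sum>i<n. z i) = d - 1"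
    and "\<forall>i<n. y i + v i = z i + w i"
  shows "\<forall>T \<in> odeco_variety n d.
     (\<Sum>s<n. ucoord n d (unit_add y s) T * ucoord n d (unit_add v s) T
             - ucoord n d (unit_add w s) T * ucoord n d (unit_add z s) T) = 0"
proof
  fix T assume T: "T \<in> odeco_variety n d"
  let ?p = "\<lambda>T. (\<Sum>s<n. ucoord n d (unit_add y s) T * ucoord n d (unit_add v s) T
             - ucoord n d (unit_add w s) T * ucoord n d (unit_add z s) T)"
  have pp: "?p \<in> poly_fun"
    by (intro poly_sum poly_diff pf_mult poly_ucoord)
  have "?p X = 0" if X: "X \<in> odeco_tensors n d" for X
  proof -
    obtain lam vv where Xd: "X = odeco_tensor n d lam vv" and ob: "orthonormal_basis n vv"
      using X unfolding odeco_tensors_def by auto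
    define P where "P i a = (\<Prod>j<n. vv i j ^ a j)" for i a
    have d1: "d \<ge> 1" using assms by simp
    have u: "\<And>a s. (\<Sum>j<n. a j) = d - 1 \<Longrightarrow> s < n \<Longrightarrow> ucoord n d (unit_add a s) X =
        of_nat (fact d) * complex_of_real (\<Sum>i<n. (lam i * P i a) * vv i s)"
      unfolding Xd P_def by (rule ucoord_odeco[OF _ d1])
    have PP: "P i y * P i v = P i z * P i w" for i
    proof -
      have "P i y * P i v = (\<Prod>j<n. vv i j ^ (y j + v j))"
        unfolding P_def by (simp add: power_add prod.distrib)
      also have "\<dots> = (\<Prod>j<n. vv i j ^ (z j + w j))"
        using assms(7) by (intro prod.cong) auto
      also have "\<dots> = P i z * P i w"
        unfolding P_def by (simp add: power_add prod.distrib)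
      finally show ?thesis .
    qed
    define c where "c = (of_nat (fact d) :: complex)"
    define F where "F a s = (\<Sum>i<n. (lam i * P i a) * vv i s)" for a s
    have u': "\<And>a s. (\<Sum>j<n. a j) = d - 1 \<Longrightarrow> s < n \<Longrightarrow>
        ucoord n d (unit_add a s) X = c * complex_of_real (F a s)"
      unfolding c_def F_def by (rule u)
    have e: "ucoord n d (unit_add y s) X * ucoord n d (unit_add v s) X
             - ucoord n d (unit_add w s) X * ucoord n d (unit_add z s) X
           = c * c * complex_of_real (F y s * F v s - F w s * F z s)" if s: "s < n" for s
    proof -
      have "ucoord n d (unit_add y s) X * ucoord n d (unit_add v s) X
             - ucoord n d (unit_add w s) X * ucoord n d (unit_add z s) X
          = c * complex_of_real (F y s) * (c * complex_of_real (F v s))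
             - c * complex_of_real (F w s) * (c * complex_of_real (F z s))"
        using u'[OF assms(3) s] u'[OF assms(4) s] u'[OF assms(5) s] u'[OF assms(6) s] by simp
      also have "\<dots> = c * c * complex_of_real (F y s * F v s - F w s * F z s)"
        by (simp only: of_real_diff of_real_mult) (simp add: algebra_simps)
      finally show ?thesis .
    qed
    have "?p X = (\<Sum>s<n. c * c * complex_of_real (F y s * F v s - F w s * F z s))"
      using e by (intro sum.cong) auto
    also have "\<dots> = c * c * complex_of_real (\<Sum>s<n. F y s * F v s - F w s * F z s)"
      by (simp only: sum_distrib_left[symmetric] of_real_sum)
    also have "(\<Sum>s<n. F y s * F v s - F w s * F z s) = 0"
    proof -
      have "(\<Sum>s<n. F y s * F v s) = (\<Sum>s<n. F w s * F z s)"
        unfolding F_def ortho_sum[OF ob]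
      proof (rule sum.cong[OF refl])
        fix i show "lam i * P i y * (lam i * P i v) = lam i * P i w * (lam i * P i z)"
          using PP[of i] by (simp add: algebra_simps)
      qed
      then show ?thesis by (simp add: sum_subtractf)
    qed
    finally show ?thesis by simp
  qed
  then have all0: "\<forall>X\<in>odeco_tensors n d. ?p X = 0" by (rule ballI)
  have cl: "\<forall>p\<in>poly_fun. (\<forall>X\<in>odeco_tensors n d. p X = 0) \<longrightarrow> p T = 0"
    using T unfolding odeco_variety_def zariski_closure_def mem_Collect_eq by (rule conjunct2)
  have "(\<forall>X\<in>odeco_tensors n d. ?p X = 0) \<longrightarrow> ?p T = 0"
    using cl pp by (rule bspec)
  then show "?p T = 0"
    using all0 by (rule mp)
qed

end
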